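(* Let $A_i\in\mathbb{R}^{n\times n}$, $i\ge -1$, be entrywise nonnegative matrices such that $A=\sum_{i=-1}^{\infty}A_i$ is irreducible and row stochastic. Assume that $\sum_{i=-1}^\infty iA_i$ converges and $\eta=\mathbf v^T\mathbf w<0$, where $\mathbf v>0$ satisfies $\mathbf v^TA=\mathbf v^T$, $\mathbf v^T\mathbf e=1$, and $\mathbf w=\sum_{i=-1}^\infty iA_i\mathbf e$. Let $G$ be the componentwise minimal nonnegative solution of $X=\sum_{i=-1}^{\infty}A_iX^{i+1}$. Set $X_0=0$ and, for a sequence of reals $\{\omega_k\}_{k\ge1}$, define for $k\ge0$ \[ (I_n-A_0)Y_k=A_{-1}+\sum_{i=1}^{\infty}A_iX_k^{i+1},\qquad X_{k+1}=Y_k+\omega_{k+1}(I_n-A_0)^{-1}A_1\,(Y_k^2-X_k^2). \] If $\{\omega_k\}_{k\ge1}$ is eligible, then $\{X_k\}_{k\in\mathbb N}$ converges monotonically to $G$.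
   Context: $\mathbf e$ is the all-ones vector; inequalities between matrices/vectors are entrywise. The sequence $\{\omega_k\}_{k\ge1}$ is called eligible (for the iteration above) if $\omega_k\ge 0$ for all $k\ge1$ and, for all $k\ge 0$, with $X_k,Y_k,X_{k+1}$ generated by the iteration, \[ \omega_{k+1}A_1(Y_k^2-X_k^2)\le A_1(X_{k+1}^2-X_k^2)+\sum_{i=2}^{\infty}A_i(Y_k^{i+1}-X_k^{i+1}) \] and \[ X_{k+1}\mathbf e=Y_k\mathbf e+\omega_{k+1}(I_n-A_0)^{-1}A_1(Y_k^2-X_k^2)\mathbf e\le \mathbf e . \] *)

theory Defs
  imports "HOL-Analysis.Analysis"
begin

text \<open>Matrices are real^'n^'n; the order on vec is entrywise, so \<le> on matrices and
  vectors is the entrywise order of the paper.\<close>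

primrec mpow :: "real^'n^'n \<Rightarrow> nat \<Rightarrow> real^'n^'n" where
  "mpow M 0 = mat 1"
| "mpow M (Suc k) = M ** mpow M k"

definition ones :: "real^'n" where "ones = (\<chi> i. 1)"

definition irreducible_mat :: "real^'n^'n \<Rightarrow> bool" where
  "irreducible_mat M \<longleftrightarrow> (\<forall>i j. \<exists>k\<ge>1. mpow M k $ i $ j > 0)"

definition row_stochastic :: "real^'n^'n \<Rightarrow> bool" where
  "row_stochastic M \<longleftrightarrow> 0 \<le> M \<and> M *v ones = ones"

text \<open>Coefficients are indexed by int; only indices i \<ge> -1 are used.
  The series \<Sum>_{i\<ge>-1} f i is written (\<Sum>k. f (int k - 1)).\<close>

definition eligible ::
  "(int \<Rightarrow> real^'n^'n) \<Rightarrow> (nat \<Rightarrow> real^'n^'n) \<Rightarrow> (nat \<Rightarrow> real^'n^'n)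
     \<Rightarrow> (nat \<Rightarrow> real) \<Rightarrow> bool" where
  "eligible A X Y \<omega> \<longleftrightarrow>
     (\<forall>k\<ge>1. \<omega> k \<ge> 0) \<and>
     (\<forall>k. \<omega> (Suc k) *\<^sub>R (A 1 ** (mpow (Y k) 2 - mpow (X k) 2))
            \<le> A 1 ** (mpow (X (Suc k)) 2 - mpow (X k) 2)
              + (\<Sum>m. A (int m + 2) ** (mpow (Y k) (m + 3) - mpow (X k) (m + 3)))) \<and>
     (\<forall>k. X (Suc k) *v ones
            = Y k *v ones + \<omega> (Suc k) *\<^sub>R
                ((matrix_inv (mat 1 - A 0) ** A 1 ** (mpow (Y k) 2 - mpow (X k) 2)) *v ones)
          \<and> X (Suc k) *v ones \<le> ones)"

end

theory Submission
  imports Defs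
begin


lemma mat_le_iff: "(M::real^'n^'m) \<le> N \<longleftrightarrow> (\<forall>i j. M$i$j \<le> N$i$j)"
  by (simp add: less_eq_vec_def)

lemma vec_le_iff: "(x::real^'n) \<le> y \<longleftrightarrow> (\<forall>i. x$i \<le> y$i)"
  by (simp add: less_eq_vec_def)

lemma mm_nth: "(A ** B) $ i $ j = (\<Sum>k\<in>UNIV. A$i$k * B$k$j)"
  by (simp add: matrix_matrix_mult_def)

lemma mv_nth: "(A *v x) $ i = (\<Sum>j\<in>UNIV. A$i$j * x$j)"
  by (simp add: matrix_vector_mult_def)

lemma ones_nth[simp]: "ones $ i = 1"
  by (simp add: ones_def)

lemma mm_nonneg: "0 \<le> (A::real^'n^'m) \<Longrightarrow> 0 \<le> (B::real^'p^'n) \<Longrightarrow> 0 \<le> A ** B"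
  by (auto simp: mat_le_iff mm_nth intro!: sum_nonneg)

lemma mm_mono_left: "0 \<le> (A::real^'n^'m) \<Longrightarrow> (B::real^'p^'n) \<le> C \<Longrightarrow> A ** B \<le> A ** C"
  by (auto simp: mat_le_iff mm_nth intro!: sum_mono mult_left_mono)

lemma mm_mono_right: "0 \<le> (C::real^'p^'n) \<Longrightarrow> (A::real^'n^'m) \<le> B \<Longrightarrow> A ** C \<le> B ** C"
  by (auto simp: mat_le_iff mm_nth intro!: sum_mono mult_right_mono)

lemma mv_nonneg: "0 \<le> (A::real^'n^'m) \<Longrightarrow> 0 \<le> (x::real^'n) \<Longrightarrow> 0 \<le> A *v x"
  by (auto simp: mat_le_iff vec_le_iff mv_nth intro!: sum_nonneg)

lemma mv_mono: "0 \<le> (A::real^'n^'m) \<Longrightarrow> (x::real^'n) \<le> y \<Longrightarrow> A *v x \<le> A *v y"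
  by (auto simp: mat_le_iff vec_le_iff mv_nth intro!: sum_mono mult_left_mono)

lemma mv_mono_mat: "0 \<le> (x::real^'n) \<Longrightarrow> (A::real^'n^'m) \<le> B \<Longrightarrow> A *v x \<le> B *v x"
  by (auto simp: mat_le_iff vec_le_iff mv_nth intro!: sum_mono mult_right_mono)

lemma mpow_nonneg: "0 \<le> M \<Longrightarrow> 0 \<le> mpow M k"
  by (induction k) (auto simp: mat_le_iff mat_def mm_nth intro!: sum_nonneg)

lemma mpow_mono: "0 \<le> M \<Longrightarrow> M \<le> N \<Longrightarrow> mpow M k \<le> mpow N k"
proof (induction k)
  case 0 then show ?case by simp
next
  case (Suc k)
  have "M ** mpow M k \<le> M ** mpow N k" using Suc by (intro mm_mono_left) auto
  also have "\<dots> \<le> N ** mpow N k" using Suc by (intro mm_mono_right mpow_nonneg) (auto intro: order_trans)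
  finally show ?case by simp
qed

lemma mpow_add: "mpow M (a + b) = mpow M a ** mpow M b"
  by (induction a) (auto simp: matrix_mul_assoc)

lemma mpow_1[simp]: "mpow M 1 = M"
  by simp

lemma mpow_2: "mpow M 2 = M ** M"
  by (simp add: numeral_2_eq_2)

lemma mpow_Suc': "mpow M (Suc k) = mpow M k ** M"
  using mpow_add[of M k 1] by simp

lemma mpow_zero: "k \<ge> 1 \<Longrightarrow> mpow 0 k = 0"
  by (cases k) auto

lemma mm_diff_left: "((A::real^'n^'m) - B) ** (C::real^'p^'n) = A ** C - B ** C"
  by (simp add: vec_eq_iff mm_nth left_diff_distrib sum_subtractf)

lemma mm_diff_right: "(A::real^'n^'m) ** ((B::real^'p^'n) - C) = A ** B - A ** C"
  by (simp add: vec_eq_iff mm_nth right_diff_distrib sum_subtractf)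

lemma mm_add_left: "((A::real^'n^'m) + B) ** (C::real^'p^'n) = A ** C + B ** C"
  by (simp add: vec_eq_iff mm_nth distrib_right sum.distrib)

lemma mm_add_right: "(A::real^'n^'m) ** ((B::real^'p^'n) + C) = A ** B + A ** C"
  by (simp add: vec_eq_iff mm_nth distrib_left sum.distrib)

lemma mm_scaleR_left: "(c *\<^sub>R (A::real^'n^'m)) ** (C::real^'p^'n) = c *\<^sub>R (A ** C)"
  by (simp add: vec_eq_iff mm_nth sum_distrib_left mult.assoc)

lemma mm_scaleR_right: "(A::real^'n^'m) ** (c *\<^sub>R (C::real^'p^'n)) = c *\<^sub>R (A ** C)"
  by (simp add: vec_eq_iff mm_nth sum_distrib_left algebra_simps)

definition substoch :: "real^'n^'n \<Rightarrow> bool" where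
  "substoch Z \<longleftrightarrow> 0 \<le> Z \<and> Z *v ones \<le> ones"

lemma mat1_ones[simp]: "mat 1 *v ones = ones"
  by simp

lemma substoch_mpow: "substoch Z \<Longrightarrow> substoch (mpow Z k)"
proof (induction k)
  case 0
  have "0 \<le> (mat 1 :: real^'n^'n)" by (simp add: mat_le_iff mat_def)
  then show ?case by (simp add: substoch_def)
next
  case (Suc k)
  then have "0 \<le> Z" "Z *v ones \<le> ones" "0 \<le> mpow Z k" "mpow Z k *v ones \<le> ones"
    by (auto simp: substoch_def)
  then have "Z *v (mpow Z k *v ones) \<le> Z *v ones" by (intro mv_mono)
  then show ?case using \<open>0 \<le> Z\<close> \<open>0 \<le> mpow Z k\<close> \<open>Z *v ones \<le> ones\<close>
    by (auto simp: substoch_def matrix_vector_mul_assoc intro: mm_nonneg order_trans)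
qed

lemma substoch_le1: "substoch Z \<Longrightarrow> Z $ i $ j \<le> 1"
proof -
  assume s: "substoch Z"
  have "Z $ i $ j \<le> (\<Sum>l\<in>UNIV. Z$i$l)"
    using s by (intro member_le_sum) (auto simp: substoch_def mat_le_iff)
  also have "\<dots> = (Z *v ones) $ i" by (simp add: mv_nth)
  also have "\<dots> \<le> 1" using s by (auto simp: substoch_def vec_le_iff)
  finally show ?thesis .
qed

lemma substoch_nonneg: "substoch Z \<Longrightarrow> 0 \<le> Z $ i $ j"
  by (auto simp: substoch_def mat_le_iff)

lemma sums_mat_nth: "f sums (s::real^'n^'m) \<Longrightarrow> (\<lambda>k. f k $ i $ j) sums (s $ i $ j)"
  unfolding sums_def
  by (drule tendsto_vec_nth[where i=i], drule tendsto_vec_nth[where i=j]) simp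

lemma sums_vec_nth: "f sums (s::real^'n) \<Longrightarrow> (\<lambda>k. f k $ i) sums (s $ i)"
  unfolding sums_def
  by (drule tendsto_vec_nth[where i=i]) simp

lemma suminf_mat_nth: "summable (f::nat \<Rightarrow> real^'n^'m) \<Longrightarrow> suminf f $ i $ j = (\<Sum>k. f k $ i $ j)"
  by (metis sums_mat_nth summable_sums sums_unique)

lemma suminf_vec_nth: "summable (f::nat \<Rightarrow> real^'n) \<Longrightarrow> suminf f $ i = (\<Sum>k. f k $ i)"
  by (metis sums_vec_nth summable_sums sums_unique)

lemma summable_matI:
  assumes "\<And>i j. summable (\<lambda>k. (f::nat \<Rightarrow> real^'n^'m) k $ i $ j)"
  shows "summable f"
proof -
  have "f sums (\<chi> i j. \<Sum>k. f k $ i $ j)"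
    unfolding sums_def
    by (intro vec_tendstoI) (simp add: summable_LIMSEQ assms)
  then show ?thesis by (rule sums_summable)
qed

lemma summable_mat_nth: "summable (f::nat \<Rightarrow> real^'n^'m) \<Longrightarrow> summable (\<lambda>k. f k $ i $ j)"
  using sums_mat_nth summable_sums sums_summable by blast

lemma suminf_mat_le:
  assumes "summable (f::nat \<Rightarrow> real^'n^'m)" "summable g" "\<And>k. f k \<le> g k"
  shows "suminf f \<le> suminf g"
  using assms by (auto simp: mat_le_iff suminf_mat_nth intro!: suminf_le summable_mat_nth)

lemma suminf_mat_nonneg:
  assumes "summable (f::nat \<Rightarrow> real^'n^'m)" "\<And>k. 0 \<le> f k"
  shows "0 \<le> suminf f"
  using assms by (auto simp: mat_le_iff suminf_mat_nth intro!: suminf_nonneg summable_mat_nth)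



lemma irred_closed:
  fixes M :: "real^'n^'n"
  assumes irr: "irreducible_mat M" and nn: "0 \<le> M" and j0: "j0 \<in> S"
    and cl: "\<And>j l. j \<in> S \<Longrightarrow> M$j$l > 0 \<Longrightarrow> l \<in> S"
  shows "S = UNIV"
proof -
  have key: "j \<in> S \<Longrightarrow> mpow M k $ j $ l > 0 \<Longrightarrow> l \<in> S" for k j l
  proof (induction k arbitrary: j)
    case 0 then show ?case by (auto simp: mat_def split: if_splits)
  next
    case (Suc k)
    have "0 < (\<Sum>p\<in>UNIV. M$j$p * mpow M k $ p $ l)" using Suc.prems by (simp add: mm_nth)
    then obtain p where p: "0 < M$j$p * mpow M k $ p $ l"
      by (metis (no_types, lifting) linorder_not_less sum_nonpos)
    have "0 \<le> M$j$p" "0 \<le> mpow M k $ p $ l" using nn mpow_nonneg[OF nn, of k]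
      by (auto simp: mat_le_iff)
    with p have "0 < M$j$p" "0 < mpow M k $ p $ l"
      by (auto simp: zero_less_mult_iff)
    then show ?case using Suc cl by blast
  qed
  show ?thesis
  proof safe
    fix l
    obtain k where "mpow M k $ j0 $ l > 0" using irr unfolding irreducible_mat_def by blast
    then show "l \<in> S" using key j0 by blast
  qed auto
qed

locale setting =
  fixes A :: "int \<Rightarrow> real^'n^'n" and v :: "real^'n"
  assumes nonneg: "\<And>i. i \<ge> -1 \<Longrightarrow> 0 \<le> A i"
    and summable_A: "summable (\<lambda>k. A (int k - 1))"
    and irred: "irreducible_mat (\<Sum>k. A (int k - 1))"
    and stoch: "row_stochastic (\<Sum>k. A (int k - 1))"
    and summable_iA: "summable (\<lambda>k. of_int (int k - 1) *\<^sub>R A (int k - 1))"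
    and v_pos: "\<And>i. v $ i > 0"
    and v_stat: "v v* (\<Sum>k. A (int k - 1)) = v"
    and v_norm: "v \<bullet> ones = 1"
    and eta_neg: "v \<bullet> ((\<Sum>k. of_int (int k - 1) *\<^sub>R A (int k - 1)) *v ones) < 0"
begin

definition "Asum = (\<Sum>k. A (int k - 1))"
definition "Wm = (\<Sum>k. of_int (int k - 1) *\<^sub>R A (int k - 1))"
definition "w = Wm *v ones"
definition "eta = v \<bullet> w"

lemma eta_neg': "eta < 0" using eta_neg by (simp add: eta_def w_def Wm_def)

lemma A_nn: "0 \<le> A (int t - 1)" by (rule nonneg) simp

lemma A_nn_e: "0 \<le> A (int t - 1) $ j $ l" using A_nn by (simp add: mat_le_iff)

lemma A_summ_e: "summable (\<lambda>t. A (int t - 1) $ j $ l)"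
  by (rule summable_mat_nth[OF summable_A])

lemma Asum_nth: "Asum $ j $ l = (\<Sum>t. A (int t - 1) $ j $ l)"
  unfolding Asum_def by (rule suminf_mat_nth[OF summable_A])

lemma Asum_nn: "0 \<le> Asum $ j $ l"
  unfolding Asum_nth by (intro suminf_nonneg A_summ_e A_nn_e)

lemma Asum_nn': "0 \<le> Asum" using Asum_nn by (simp add: mat_le_iff)

lemma Asum_row: "(\<Sum>l\<in>UNIV. Asum $ j $ l) = 1"
proof -
  have "Asum *v ones = ones" using stoch by (simp add: row_stochastic_def Asum_def)
  then have "(Asum *v ones) $ j = 1" by simp
  then show ?thesis by (simp add: mv_nth)
qed

lemma rowsum_summable: "summable (\<lambda>t. \<Sum>l\<in>UNIV. A (int t - 1) $ j $ l)"
  by (intro summable_sum A_summ_e)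

lemma rowsum_suminf: "(\<Sum>t. \<Sum>l\<in>UNIV. A (int t - 1) $ j $ l) = 1"
  by (subst suminf_sum) (auto simp: A_summ_e Asum_nth[symmetric] Asum_row)

lemma A_le_Asum: "A (int t - 1) $ j $ l \<le> Asum $ j $ l"
proof -
  have "sum (\<lambda>t. A (int t - 1) $ j $ l) {t} \<le> (\<Sum>t. A (int t - 1) $ j $ l)"
    by (rule sum_le_suminf) (auto simp: A_summ_e A_nn_e)
  then show ?thesis by (simp add: Asum_nth)
qed

lemma Wm_nth: "Wm $ j $ l = (\<Sum>t. of_int (int t - 1) * A (int t - 1) $ j $ l)"
  unfolding Wm_def using suminf_mat_nth[OF summable_iA] by simp

lemma iA_summ_e: "summable (\<lambda>t. of_int (int t - 1) * A (int t - 1) $ j $ l)"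
  using summable_mat_nth[OF summable_iA] by simp

lemma not_all_A0: "\<not> (\<forall>j l. Asum $ j $ l = A 0 $ j $ l)"
proof
  assume H: "\<forall>j l. Asum $ j $ l = A 0 $ j $ l"
  have z: "A (int t - 1) $ j $ l = 0" if "t \<noteq> 1" for t j l
  proof -
    let ?f = "\<lambda>t. A (int t - 1) $ j $ l"
    let ?g = "\<lambda>t. if t = 1 then 0 else ?f t"
    have g: "?g = (\<lambda>t. ?f t - (if t = 1 then ?f 1 else 0))" by auto
    have "(\<lambda>t::nat. if t = 1 then ?f 1 else 0) sums ?f 1"
      using sums_single[of 1 "\<lambda>_. ?f 1"] by simp
    then have "summable (\<lambda>t::nat. if t = 1 then ?f 1 else 0)"
      and "(\<Sum>t. if t = 1 then ?f 1 else 0) = ?f 1" by (auto simp: sums_iff)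
    then have "suminf ?g = suminf ?f - ?f 1"
      unfolding g using A_summ_e \<open>summable (\<lambda>t::nat. if t = 1 then ?f 1 else 0)\<close>
      by (subst suminf_diff[symmetric]) auto
    also have "\<dots> = 0" using H Asum_nth[of j l] by simp
    finally have "suminf ?g = 0" .
    moreover have "summable ?g" unfolding g
      by (intro summable_diff A_summ_e summable_single)
    ultimately have "\<forall>t. ?g t = 0"
      by (subst suminf_eq_zero_iff[symmetric]) (auto simp: A_nn_e)
    then show ?thesis using that by metis
  qed
  have "Wm $ j $ l = 0" for j l
  proof -
    have "(\<lambda>t. of_int (int t - 1) * A (int t - 1) $ j $ l) = (\<lambda>t. 0)"
      using z by (auto simp: fun_eq_iff)
    then show ?thesis by (simp add: Wm_nth)
  qed
  then have "Wm = 0" by (simp add: vec_eq_iff)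
  then show False using eta_neg' by (simp add: eta_def w_def)
qed

lemma A0_minprinciple:
  fixes z :: "'n \<Rightarrow> real"
  assumes sup: "\<And>j. (\<Sum>l\<in>UNIV. A 0 $ j $ l * z l) \<le> z j"
  shows "0 \<le> z j"
proof (rule ccontr)
  assume neg: "\<not> 0 \<le> z j"
  define m where "m = Min (range z)"
  have mle: "m \<le> z l" for l unfolding m_def by simp
  have mneg: "m < 0" using mle[of j] neg by simp
  define S where "S = {j. z j = m}"
  have "m \<in> range z" unfolding m_def by (intro Min_in) auto
  then obtain j0 where j0: "j0 \<in> S" unfolding S_def by auto
  have A0e: "A 0 = A (int 1 - 1)" by simp
  have A0nn: "0 \<le> A 0 $ j $ l" for j l using A_nn_e[of 1] by simp
  have A0le: "A 0 $ j $ l \<le> Asum $ j $ l" for j l using A_le_Asum[of 1] by simp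
  have rowfull: "Asum $ j $ l = A 0 $ j $ l \<and> (A 0 $ j $ l > 0 \<longrightarrow> l \<in> S)" if jS: "j \<in> S" for j l
  proof -
    define r where "r = (\<Sum>l\<in>UNIV. A 0 $ j $ l)"
    have r1: "r \<le> 1" unfolding r_def Asum_row[of j, symmetric] by (intro sum_mono A0le)
    have "(\<Sum>l\<in>UNIV. A 0 $ j $ l * z l) = m * r + (\<Sum>l\<in>UNIV. A 0 $ j $ l * (z l - m))"
      by (simp add: r_def sum_distrib_left sum_distrib_right algebra_simps sum.distrib[symmetric])
    then have eq: "m * r + (\<Sum>l\<in>UNIV. A 0 $ j $ l * (z l - m)) \<le> m"
      using sup[of j] jS by (simp add: S_def)
    have s0: "0 \<le> (\<Sum>l\<in>UNIV. A 0 $ j $ l * (z l - m))"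
      by (intro sum_nonneg mult_nonneg_nonneg A0nn) (simp add: mle)
    have "m * 1 \<le> m * r" using mneg r1 by (subst mult_le_cancel_left) simp
    with eq s0 have s00: "(\<Sum>l\<in>UNIV. A 0 $ j $ l * (z l - m)) = 0" and "m * r = m * 1"
      by linarith+
    then have "r = 1" using mneg by simp
    have t0: "A 0 $ j $ l * (z l - m) = 0" for l
      using s00 by (subst (asm) sum_nonneg_eq_0_iff) (auto intro: mult_nonneg_nonneg A0nn simp: mle)
    have "(\<Sum>l\<in>UNIV. Asum $ j $ l - A 0 $ j $ l) = 0"
      using \<open>r = 1\<close> by (simp add: sum_subtractf r_def Asum_row)
    then have "Asum $ j $ l - A 0 $ j $ l = 0"
      by (subst (asm) sum_nonneg_eq_0_iff) (auto simp: A0le)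
    moreover have "A 0 $ j $ l > 0 \<longrightarrow> l \<in> S" using t0[of l] by (auto simp: S_def)
    ultimately show ?thesis by simp
  qed
  have "S = UNIV"
    using irred[folded Asum_def] Asum_nn' j0
    by (rule irred_closed) (use rowfull in auto)
  then show False using not_all_A0 rowfull by auto
qed

definition "B0 = mat 1 - A 0"

lemma B0_mv_nth: "(B0 *v z) $ j = z $ j - (\<Sum>l\<in>UNIV. A 0 $ j $ l * z $ l)"
  unfolding B0_def matrix_vector_mult_diff_rdistrib by (simp add: mv_nth[of "A 0"])

lemma B0_mm_nth: "(B0 ** Z) $ j $ p = Z $ j $ p - (\<Sum>l\<in>UNIV. A 0 $ j $ l * Z $ l $ p)"
  unfolding B0_def mm_diff_left by (simp add: mm_nth[of "A 0"])

lemma B0_pos_vec: "0 \<le> B0 *v z \<Longrightarrow> 0 \<le> z"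
proof -
  assume h: "0 \<le> B0 *v z"
  have "(\<Sum>l\<in>UNIV. A 0 $ j $ l * z $ l) \<le> z $ j" for j
    using h unfolding vec_le_iff B0_mv_nth by (simp add: vec_le_iff)
  then show ?thesis using A0_minprinciple[of "\<lambda>l. z $ l"] by (simp add: vec_le_iff)
qed

lemma B0_pos_mat: "0 \<le> B0 ** Z \<Longrightarrow> 0 \<le> Z"
proof -
  assume h: "0 \<le> B0 ** Z"
  have "(\<Sum>l\<in>UNIV. A 0 $ j $ l * Z $ l $ p) \<le> Z $ j $ p" for j p
    using h unfolding mat_le_iff B0_mm_nth by (simp add: mat_le_iff)
  then show ?thesis using A0_minprinciple[of "\<lambda>l. Z $ l $ p" for p] by (simp add: mat_le_iff)
qed

lemma B0_inv: "B0 ** matrix_inv B0 = mat 1 \<and> matrix_inv B0 ** B0 = mat 1"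
proof -
  have "\<forall>x. B0 *v x = 0 \<longrightarrow> x = 0"
  proof safe
    fix x assume h: "B0 *v x = 0"
    have "B0 *v (-x) = - (B0 *v x)"
      using matrix_vector_mult_diff_distrib[of B0 0 x] by simp
    with h have "0 \<le> B0 *v x" "0 \<le> B0 *v (-x)" by auto
    then have "0 \<le> x" "0 \<le> -x" using B0_pos_vec by blast+
    then show "x = 0" unfolding vec_le_iff by (simp add: vec_eq_iff) (meson neg_0_le_iff_le order.antisym)
  qed
  then have "\<exists>B. B ** B0 = mat 1" by (subst matrix_left_invertible_ker)
  then have "invertible B0" by (subst invertible_left_inverse)
  then have "\<exists>A'. B0 ** A' = mat 1 \<and> A' ** B0 = mat 1" by (simp add: invertible_def)
  then show ?thesis unfolding matrix_inv_def by (rule someI_ex)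
qed

lemma B0_inv_nn: "0 \<le> matrix_inv B0"
proof -
  have "0 \<le> (mat 1 :: real^'n^'n)" by (simp add: mat_le_iff mat_def)
  then show ?thesis using B0_inv by (rule_tac B0_pos_mat) simp
qed

end



lemma mv_suminf_nth:
  assumes "summable (f::nat \<Rightarrow> real^'n^'m)"
  shows "(suminf f *v y) $ j = (\<Sum>t. (f t *v y) $ j)"
proof -
  have "(suminf f *v y) $ j = (\<Sum>p\<in>UNIV. (\<Sum>t. f t $ j $ p) * y $ p)"
    by (simp add: mv_nth suminf_mat_nth[OF assms])
  also have "\<dots> = (\<Sum>p\<in>UNIV. (\<Sum>t. f t $ j $ p * y $ p))"
    by (intro sum.cong refl suminf_mult2 summable_mat_nth[OF assms])
  also have "\<dots> = (\<Sum>t. \<Sum>p\<in>UNIV. f t $ j $ p * y $ p)"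
    by (rule suminf_sum[symmetric]) (intro summable_mult2 summable_mat_nth[OF assms])
  also have "\<dots> = (\<Sum>t. (f t *v y) $ j)" by (simp add: mv_nth)
  finally show ?thesis .
qed

context setting
begin

lemma Asum_maxprinciple:
  assumes fx: "Asum *v x = x"
  shows "x $ j = x $ l"
proof -
  define M where "M = Max (range (\<lambda>l. x $ l))"
  have leM: "x $ l \<le> M" for l unfolding M_def by simp
  define S where "S = {j. x $ j = M}"
  have "M \<in> range (\<lambda>l. x $ l)" unfolding M_def by (intro Min_in Max_in) auto
  then obtain j0 where j0: "j0 \<in> S" unfolding S_def by auto
  have cl: "l \<in> S" if jS: "j \<in> S" and pos: "Asum $ j $ l > 0" for j l
  proof -
    have "(Asum *v x) $ j = x $ j" using fx by simp
    then have "(\<Sum>l\<in>UNIV. Asum $ j $ l * x $ l) = x $ j" by (simp only: mv_nth)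
    then have "(\<Sum>l\<in>UNIV. Asum $ j $ l * (M - x $ l)) = 0"
      using jS Asum_row[of j]
      by (simp add: S_def right_diff_distrib sum_subtractf sum_distrib_right[symmetric])
    then have "Asum $ j $ l * (M - x $ l) = 0"
      by (subst (asm) sum_nonneg_eq_0_iff) (auto intro!: mult_nonneg_nonneg Asum_nn simp: leM)
    then show ?thesis using pos by (simp add: S_def)
  qed
  have "S = UNIV" using irred[folded Asum_def] Asum_nn' j0 cl by (rule irred_closed)
  then have "x $ j = M" "x $ l = M" unfolding S_def by (metis UNIV_I mem_Collect_eq)+
  then show ?thesis by simp
qed

lemma v_Asum: "v \<bullet> (Asum *v x) = v \<bullet> x"
proof -
  have vs: "(\<Sum>i\<in>UNIV. v $ i * Asum $ i $ j) = v $ j" for j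
  proof -
    have "(v v* Asum) $ j = v $ j" using v_stat[folded Asum_def] by simp
    then show ?thesis by (simp add: vector_matrix_mult_def)
  qed
  have "v \<bullet> (Asum *v x) = (\<Sum>i\<in>UNIV. v $ i * (\<Sum>j\<in>UNIV. Asum $ i $ j * x $ j))"
    by (simp add: inner_vec_def mv_nth)
  also have "\<dots> = (\<Sum>i\<in>UNIV. \<Sum>j\<in>UNIV. v $ i * Asum $ i $ j * x $ j)"
    by (simp add: sum_distrib_left mult.assoc)
  also have "\<dots> = (\<Sum>j\<in>UNIV. \<Sum>i\<in>UNIV. v $ i * Asum $ i $ j * x $ j)"
    by (rule sum.swap)
  also have "\<dots> = (\<Sum>j\<in>UNIV. (\<Sum>i\<in>UNIV. v $ i * Asum $ i $ j) * x $ j)"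
    by (simp only: sum_distrib_right)
  also have "\<dots> = v \<bullet> x" by (simp add: vs inner_vec_def)
  finally show ?thesis .
qed

definition "Pm = ((\<chi> i j. v $ j) :: real^'n^'n)"
definition "Bp = mat 1 - Asum + Pm"

lemma Pm_mv: "Pm *v x = (v \<bullet> x) *\<^sub>R ones"
  by (simp add: vec_eq_iff Pm_def mv_nth inner_vec_def)

lemma Bp_mv: "Bp *v x = x - Asum *v x + (v \<bullet> x) *\<^sub>R ones"
  by (simp add: Bp_def matrix_vector_mult_add_rdistrib matrix_vector_mult_diff_rdistrib Pm_mv)

lemma v_Bp: "v \<bullet> (Bp *v x) = v \<bullet> x"
  by (simp add: Bp_mv inner_diff_right inner_add_right v_Asum v_norm)

lemma Bp_inv: "Bp ** matrix_inv Bp = mat 1"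
proof -
  have "\<forall>x. Bp *v x = 0 \<longrightarrow> x = 0"
  proof safe
    fix x assume h: "Bp *v x = 0"
    then have vx: "v \<bullet> x = 0" using v_Bp[of x] by simp
    then have "Asum *v x = x" using h by (simp add: Bp_mv)
    then have c: "x $ j = x $ l" for j l by (rule Asum_maxprinciple)
    obtain j0 :: 'n where True by simp
    have "x = x $ j0 *\<^sub>R ones" using c by (auto simp: vec_eq_iff)
    then have "v \<bullet> x = x $ j0 * (v \<bullet> ones)" by (metis inner_scaleR_right)
    then have "v \<bullet> x = x $ j0" using v_norm by simp
    with vx c show "x = 0" by (auto simp: vec_eq_iff) (metis)
  qed
  then have "\<exists>B. B ** Bp = mat 1" by (subst matrix_left_invertible_ker)
  then have "invertible Bp" by (subst invertible_left_inverse)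
  then have "\<exists>A'. Bp ** A' = mat 1 \<and> A' ** Bp = mat 1" by (simp add: invertible_def)
  then show ?thesis unfolding matrix_inv_def by (rule someI_ex[THEN conjunct1])
qed

lemma poisson: "\<exists>h. Asum *v h = h - w + eta *\<^sub>R ones"
proof -
  define g where "g = w - eta *\<^sub>R ones"
  have vg: "v \<bullet> g = 0" by (simp add: g_def inner_diff_right v_norm eta_def)
  define h where "h = matrix_inv Bp *v g"
  have Bh: "Bp *v h = g" by (simp add: h_def matrix_vector_mul_assoc Bp_inv)
  then have "v \<bullet> h = 0" using v_Bp[of h] vg by simp
  then have "h - Asum *v h = g" using Bh by (simp add: Bp_mv)
  then have "Asum *v h = h - w + eta *\<^sub>R ones" by (simp add: g_def algebra_simps)
  then show ?thesis by blast
qed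

end



context setting
begin

lemma rowseries_summable:
  assumes "\<And>t l. \<bar>y t l\<bar> \<le> c"
  shows "summable (\<lambda>t. \<Sum>l\<in>UNIV. A (int t - 1) $ j $ l * y t l)"
proof (rule summable_comparison_test)
  show "summable (\<lambda>t. c * (\<Sum>l\<in>UNIV. A (int t - 1) $ j $ l))"
    by (intro summable_mult rowsum_summable)
  have "\<bar>\<Sum>l\<in>UNIV. A (int t - 1) $ j $ l * y t l\<bar> \<le> c * (\<Sum>l\<in>UNIV. A (int t - 1) $ j $ l)" for t
  proof -
    have "\<bar>\<Sum>l\<in>UNIV. A (int t - 1) $ j $ l * y t l\<bar> \<le> (\<Sum>l\<in>UNIV. \<bar>A (int t - 1) $ j $ l * y t l\<bar>)"
      by (rule sum_abs)
    also have "\<dots> \<le> (\<Sum>l\<in>UNIV. A (int t - 1) $ j $ l * c)"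
      by (intro sum_mono) (simp add: abs_mult A_nn_e mult_left_mono assms)
    finally show ?thesis by (simp add: sum_distrib_left mult.commute)
  qed
  then show "\<exists>N. \<forall>n\<ge>N. norm (\<Sum>l\<in>UNIV. A (int n - 1) $ j $ l * y n l) \<le> c * (\<Sum>l\<in>UNIV. A (int n - 1) $ j $ l)"
    by auto
qed

lemma w_nth: "w $ j = (\<Sum>t. of_int (int t - 1) * (\<Sum>l\<in>UNIV. A (int t - 1) $ j $ l))"
proof -
  have "w $ j = (\<Sum>l\<in>UNIV. Wm $ j $ l)" by (simp add: w_def mv_nth)
  also have "\<dots> = (\<Sum>l\<in>UNIV. \<Sum>t. of_int (int t - 1) * A (int t - 1) $ j $ l)" by (simp add: Wm_nth)
  also have "\<dots> = (\<Sum>t. \<Sum>l\<in>UNIV. of_int (int t - 1) * A (int t - 1) $ j $ l)"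
    by (rule suminf_sum[symmetric]) (rule iA_summ_e)
  also have "\<dots> = (\<Sum>t. of_int (int t - 1) * (\<Sum>l\<in>UNIV. A (int t - 1) $ j $ l))"
    by (simp add: sum_distrib_left)
  finally show ?thesis .
qed

lemma w_summable: "summable (\<lambda>t. of_int (int t - 1) * (\<Sum>l\<in>UNIV. A (int t - 1) $ j $ l))"
proof -
  have "summable (\<lambda>t. \<Sum>l\<in>UNIV. of_int (int t - 1) * A (int t - 1) $ j $ l)"
    by (intro summable_sum iA_summ_e)
  then show ?thesis by (simp add: sum_distrib_left)
qed

lemma gseries: "(\<Sum>t. \<Sum>l\<in>UNIV. A (int t - 1) $ j $ l * y l) = (\<Sum>l\<in>UNIV. Asum $ j $ l * y l)"
  and gseries_summable: "summable (\<lambda>t. \<Sum>l\<in>UNIV. A (int t - 1) $ j $ l * y l)"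
proof -
  show "(\<Sum>t. \<Sum>l\<in>UNIV. A (int t - 1) $ j $ l * y l) = (\<Sum>l\<in>UNIV. Asum $ j $ l * y l)"
    by (subst suminf_sum) (auto intro!: summable_mult2 A_summ_e simp: Asum_nth suminf_mult2[OF A_summ_e])
  show "summable (\<lambda>t. \<Sum>l\<in>UNIV. A (int t - 1) $ j $ l * y l)"
    by (intro summable_sum summable_mult2 A_summ_e)
qed

lemma solution_stochastic:
  assumes sZ: "substoch Z"
    and summZ: "summable (\<lambda>k. A (int k - 1) ** mpow Z k)"
    and solZ: "Z = (\<Sum>k. A (int k - 1) ** mpow Z k)"
  shows "Z *v ones = ones"
proof -
  define q where "q k = mpow Z k *v ones" for k
  have q01: "0 \<le> q k $ l \<and> q k $ l \<le> 1" for k l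
  proof -
    have s: "substoch (mpow Z k)" using sZ by (rule substoch_mpow)
    have "0 \<le> (ones :: real^'n)" by (simp add: vec_le_iff)
    then have "0 \<le> q k" using s unfolding q_def substoch_def by (intro mv_nonneg) auto
    moreover have "q k \<le> ones" using s unfolding q_def substoch_def by auto
    ultimately show ?thesis by (simp add: vec_le_iff)
  qed
  have qrec: "q (Suc k) $ j = (\<Sum>t. \<Sum>l\<in>UNIV. A (int t - 1) $ j $ l * q (t + k) $ l)" for k j
  proof -
    have "q (Suc k) = Z *v q k" by (simp add: q_def matrix_vector_mul_assoc)
    also have "\<dots> = (\<Sum>t. A (int t - 1) ** mpow Z t) *v q k"
      using arg_cong[where f="\<lambda>M. M *v q k", OF solZ] .
    finally have "q (Suc k) $ j = (\<Sum>t. ((A (int t - 1) ** mpow Z t) *v q k) $ j)"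
      using mv_suminf_nth[OF summZ] by simp
    also have "\<dots> = (\<Sum>t. (A (int t - 1) *v q (t + k)) $ j)"
      by (simp add: q_def mpow_add matrix_vector_mul_assoc matrix_mul_assoc)
    finally show ?thesis by (simp add: mv_nth)
  qed
  define d where "d k l = 1 - q k $ l" for k l
  have d01: "0 \<le> d k l" "d k l \<le> 1" for k l using q01[of k l] by (auto simp: d_def)
  have d0: "d 0 l = 0" for l by (simp add: d_def q_def)
  have drec: "d (Suc k) j = (\<Sum>t. \<Sum>l\<in>UNIV. A (int t - 1) $ j $ l * d (t + k) l)"
   and dsum: "summable (\<lambda>t. \<Sum>l\<in>UNIV. A (int t - 1) $ j $ l * d (t + k) l)" for k j
  proof -
    have s1: "summable (\<lambda>t. \<Sum>l\<in>UNIV. A (int t - 1) $ j $ l * q (t + k) $ l)"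
      by (rule rowseries_summable[where c=1]) (use q01 in auto)
    have "(\<Sum>t. \<Sum>l\<in>UNIV. A (int t - 1) $ j $ l * d (t + k) l)
        = (\<Sum>t. (\<Sum>l\<in>UNIV. A (int t - 1) $ j $ l) - (\<Sum>l\<in>UNIV. A (int t - 1) $ j $ l * q (t + k) $ l))"
      by (simp add: d_def right_diff_distrib sum_subtractf)
    also have "\<dots> = 1 - q (Suc k) $ j"
      by (subst suminf_diff[symmetric]) (auto simp: rowsum_summable s1 rowsum_suminf qrec)
    finally show "d (Suc k) j = (\<Sum>t. \<Sum>l\<in>UNIV. A (int t - 1) $ j $ l * d (t + k) l)"
      by (simp add: d_def)
    show "summable (\<lambda>t. \<Sum>l\<in>UNIV. A (int t - 1) $ j $ l * d (t + k) l)"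
      by (rule rowseries_summable[where c=1]) (use d01 in auto)
  qed
  obtain h where h: "Asum *v h = h - w + eta *\<^sub>R ones" using poisson by blast
  define C where "C = (\<Sum>l\<in>UNIV. \<bar>h $ l\<bar>)"
  define gv where "gv = h + C *\<^sub>R ones"
  have gnn: "0 \<le> gv $ l" for l
  proof -
    have "\<bar>h $ l\<bar> \<le> C" unfolding C_def by (rule member_le_sum) auto
    then show ?thesis by (simp add: gv_def)
  qed
  have Aones: "Asum *v ones = ones" using stoch by (simp add: row_stochastic_def Asum_def)
  have Ag: "Asum *v gv = gv - w + eta *\<^sub>R ones"
    by (simp add: gv_def h matrix_vector_right_distrib matrix_vector_mult_scaleR Aones algebra_simps)
  have Agj: "(\<Sum>l\<in>UNIV. Asum $ j $ l * gv $ l) = gv $ j - w $ j + eta" for j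
  proof -
    have "(Asum *v gv) $ j = gv $ j - w $ j + eta" using Ag by simp
    then show ?thesis by (simp add: mv_nth)
  qed
  define V where "V k l = real k + gv $ l" for k l
  have Vrec: "(\<Sum>t. \<Sum>l\<in>UNIV. A (int t - 1) $ j $ l * V (t + k) l) = V (Suc k) j + eta"
   and Vsum: "summable (\<lambda>t. \<Sum>l\<in>UNIV. A (int t - 1) $ j $ l * V (t + k) l)" for k j
  proof -
    let ?r = "\<lambda>t. \<Sum>l\<in>UNIV. A (int t - 1) $ j $ l"
    let ?c = "\<lambda>t. of_int (int t - 1) :: real"
    have trm: "(\<Sum>l\<in>UNIV. A (int t - 1) $ j $ l * V (t + k) l)
       = (?c t * ?r t + (real k + 1) * ?r t) + (\<Sum>l\<in>UNIV. A (int t - 1) $ j $ l * gv $ l)" for t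
    proof -
      have e1: "real (t + k) = ?c t + (real k + 1)" by simp
      have "(\<Sum>l\<in>UNIV. A (int t - 1) $ j $ l * V (t + k) l)
          = (\<Sum>l\<in>UNIV. A (int t - 1) $ j $ l * real (t + k)) + (\<Sum>l\<in>UNIV. A (int t - 1) $ j $ l * gv $ l)"
        by (simp add: V_def distrib_left sum.distrib)
      also have "(\<Sum>l\<in>UNIV. A (int t - 1) $ j $ l * real (t + k)) = ?r t * real (t + k)"
        by (simp add: sum_distrib_right)
      also have "\<dots> = ?c t * ?r t + (real k + 1) * ?r t" unfolding e1 by (simp add: algebra_simps)
      finally show ?thesis .
    qed
    have S1: "summable (\<lambda>t. ?c t * ?r t + (real k + 1) * ?r t)"
      by (intro summable_add w_summable summable_mult rowsum_summable)
    have S2: "summable (\<lambda>t. \<Sum>l\<in>UNIV. A (int t - 1) $ j $ l * gv $ l)" by (rule gseries_summable)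
    show "summable (\<lambda>t. \<Sum>l\<in>UNIV. A (int t - 1) $ j $ l * V (t + k) l)"
      unfolding trm by (intro summable_add S1 S2)
    have "(\<Sum>t. \<Sum>l\<in>UNIV. A (int t - 1) $ j $ l * V (t + k) l)
        = (\<Sum>t. ?c t * ?r t + (real k + 1) * ?r t) + (\<Sum>t. \<Sum>l\<in>UNIV. A (int t - 1) $ j $ l * gv $ l)"
      unfolding trm by (rule suminf_add[OF S1 S2, symmetric])
    also have "(\<Sum>t. ?c t * ?r t + (real k + 1) * ?r t) = w $ j + (real k + 1)"
    proof -
      have W1: "summable (\<lambda>t. ?c t * ?r t)" by (rule w_summable)
      have W2: "summable (\<lambda>t. (real k + 1) * ?r t)" by (intro summable_mult rowsum_summable)
      have "(\<Sum>t. ?c t * ?r t + (real k + 1) * ?r t) = (\<Sum>t. ?c t * ?r t) + (\<Sum>t. (real k + 1) * ?r t)"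
        by (rule suminf_add[OF W1 W2, symmetric])
      also have "(\<Sum>t. ?c t * ?r t) = w $ j" by (rule w_nth[symmetric])
      also have "(\<Sum>t. (real k + 1) * ?r t) = (real k + 1) * (\<Sum>t. ?r t)"
        by (rule suminf_mult[OF rowsum_summable])
      finally show ?thesis by (simp only: rowsum_suminf mult_1_right)
    qed
    also have "(\<Sum>t. \<Sum>l\<in>UNIV. A (int t - 1) $ j $ l * gv $ l) = gv $ j - w $ j + eta"
      by (simp add: gseries Agj)
    finally show "(\<Sum>t. \<Sum>l\<in>UNIV. A (int t - 1) $ j $ l * V (t + k) l) = V (Suc k) j + eta"
      by (simp add: V_def)
  qed
  have Vnn: "0 \<le> V k l" for k l using gnn[of l] by (simp add: V_def)
  have main: "d k l \<le> \<epsilon> * V k l" if epos: "\<epsilon> > 0" for \<epsilon> k l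
  proof -
    define phi where "phi k l = d k l - \<epsilon> * V k l" for k l
    have phirec: "phi (Suc k) j = (\<Sum>t. \<Sum>l\<in>UNIV. A (int t - 1) $ j $ l * phi (t + k) l) + \<epsilon> * eta"
     and phisum: "summable (\<lambda>t. \<Sum>l\<in>UNIV. A (int t - 1) $ j $ l * phi (t + k) l)" for k j
    proof -
      have eq: "(\<lambda>t. \<Sum>l\<in>UNIV. A (int t - 1) $ j $ l * phi (t + k) l)
          = (\<lambda>t. (\<Sum>l\<in>UNIV. A (int t - 1) $ j $ l * d (t + k) l) - \<epsilon> * (\<Sum>l\<in>UNIV. A (int t - 1) $ j $ l * V (t + k) l))"
        by (simp add: phi_def right_diff_distrib sum_subtractf sum_distrib_left algebra_simps)
      show "summable (\<lambda>t. \<Sum>l\<in>UNIV. A (int t - 1) $ j $ l * phi (t + k) l)"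
        unfolding eq by (intro summable_diff summable_mult dsum Vsum)
      have "(\<Sum>t. \<Sum>l\<in>UNIV. A (int t - 1) $ j $ l * phi (t + k) l) = d (Suc k) j - \<epsilon> * (V (Suc k) j + eta)"
        unfolding eq
        by (subst suminf_diff[symmetric]) (auto intro!: summable_mult dsum Vsum simp: suminf_mult[OF Vsum] drec Vrec)
      then show "phi (Suc k) j = (\<Sum>t. \<Sum>l\<in>UNIV. A (int t - 1) $ j $ l * phi (t + k) l) + \<epsilon> * eta"
        by (simp add: phi_def algebra_simps)
    qed
    define K where "K = nat \<lceil>1 / \<epsilon>\<rceil> + 1"
    have phineg: "phi k l < 0" if "k \<ge> K" for k l
    proof -
      have "1 / \<epsilon> < real K" unfolding K_def by linarith
      also have "\<dots> \<le> real k" using that by simp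
      finally have "1 < \<epsilon> * real k" using epos by (simp add: field_simps)
      moreover have "\<epsilon> * real k \<le> \<epsilon> * V k l" using epos gnn[of l] by (simp add: V_def)
      ultimately show ?thesis using d01[of k l] by (simp add: phi_def)
    qed
    have phi0: "phi 0 l \<le> 0" for l using d0[of l] Vnn[of 0 l] epos by (simp add: phi_def)
    show ?thesis
    proof (rule ccontr)
      assume "\<not> d k l \<le> \<epsilon> * V k l"
      then have pos: "phi k l > 0" by (simp add: phi_def)
      define P where "P = (\<lambda>(k, l). phi k l) ` ({..K} \<times> UNIV)"
      have finP: "finite P" "P \<noteq> {}" unfolding P_def by auto
      define M where "M = Max P"
      have kK: "k \<le> K" using phineg[of k l] pos by (meson linorder_not_le less_asym order.strict_implies_order not_less)
      have "phi k l \<in> P" unfolding P_def using kK by force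
      then have Mpos: "M > 0" using pos finP unfolding M_def by (meson Max_ge less_le_trans)
      have leM: "phi k' l' \<le> M" for k' l'
      proof (cases "k' \<le> K")
        case True
        then have "phi k' l' \<in> P" unfolding P_def by force
        then show ?thesis using finP unfolding M_def by simp
      next
        case False then show ?thesis using phineg[of k' l'] Mpos by simp
      qed
      have "M \<in> P" unfolding M_def using finP by (rule Max_in)
      then obtain k1 l1 where k1: "phi k1 l1 = M" unfolding P_def by auto
      have "k1 \<noteq> 0"
      proof
        assume "k1 = 0" then show False using phi0[of l1] k1 Mpos by simp
      qed
      then obtain k0 where k0: "k1 = Suc k0" by (cases k1) auto
      have "M = (\<Sum>t. \<Sum>l\<in>UNIV. A (int t - 1) $ l1 $ l * phi (t + k0) l) + \<epsilon> * eta"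
        using phirec[of k0 l1] k1 k0 by simp
      also have "(\<Sum>t. \<Sum>l\<in>UNIV. A (int t - 1) $ l1 $ l * phi (t + k0) l)
              \<le> (\<Sum>t. \<Sum>l\<in>UNIV. A (int t - 1) $ l1 $ l * M)"
        by (intro suminf_le phisum gseries_summable sum_mono mult_left_mono leM A_nn_e)
      also have "\<dots> = (\<Sum>l\<in>UNIV. Asum $ l1 $ l * M)" by (rule gseries)
      also have "\<dots> = M" by (simp only: sum_distrib_right[symmetric] Asum_row mult_1)
      finally have "M \<le> M + \<epsilon> * eta" by simp
      moreover have "\<epsilon> * eta < 0" using epos eta_neg' by (simp add: mult_pos_neg)
      ultimately show False by simp
    qed
  qed
  have "d 1 l \<le> 0" for l
  proof (rule ccontr)
    assume "\<not> d 1 l \<le> 0"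
    then have dp: "d 1 l > 0" by simp
    define \<epsilon> where "\<epsilon> = d 1 l / (V 1 l + 1)"
    have "\<epsilon> > 0" using dp Vnn[of 1 l] by (simp add: \<epsilon>_def)
    then have "d 1 l \<le> \<epsilon> * V 1 l" by (rule main)
    also have "\<dots> < d 1 l" using dp Vnn[of 1 l] by (simp add: \<epsilon>_def field_simps)
    finally show False by simp
  qed
  then have "1 \<le> q 1 $ l" for l by (simp add: d_def)
  moreover have "q 1 $ l \<le> 1" for l using q01 by auto
  ultimately have "q 1 = ones" by (simp add: vec_eq_iff) (meson order.antisym)
  then show ?thesis by (simp add: q_def)
qed

end



lemma mm_entry_bound:
  assumes "0 \<le> (M::real^'n^'n)" "substoch P"
  shows "0 \<le> (M ** P) $ i $ j \<and> (M ** P) $ i $ j \<le> (\<Sum>l\<in>UNIV. M $ i $ l)"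
proof
  have "0 \<le> M ** P" using assms by (intro mm_nonneg) (auto simp: substoch_def)
  then show "0 \<le> (M ** P) $ i $ j" by (simp add: mat_le_iff)
  show "(M ** P) $ i $ j \<le> (\<Sum>l\<in>UNIV. M $ i $ l)" unfolding mm_nth
    using assms by (intro sum_mono) (auto simp: mat_le_iff intro: mult_left_le substoch_le1 substoch_nonneg)
qed

lemma tendsto_mm:
  fixes f g :: "'a \<Rightarrow> real^'n^'n"
  assumes "(f \<longlongrightarrow> a) F" "(g \<longlongrightarrow> b) F"
  shows "((\<lambda>x. f x ** g x) \<longlongrightarrow> a ** b) F"
  unfolding mm_nth
  by (intro vec_tendstoI) (simp add: mm_nth, intro tendsto_intros assms)

lemma tendsto_mpow:
  fixes f :: "'a \<Rightarrow> real^'n^'n"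
  assumes "(f \<longlongrightarrow> a) F"
  shows "((\<lambda>x. mpow (f x) m) \<longlongrightarrow> mpow a m) F"
  by (induction m) (auto intro: tendsto_mm assms)

context setting
begin

lemma ps_summable:
  assumes "\<And>m. substoch (P m)"
  shows "summable (\<lambda>m. A (int m - 1) ** P m)"
proof (rule summable_matI)
  fix i j
  have "summable (\<lambda>t. \<Sum>l\<in>UNIV. A (int t - 1) $ i $ l * P t $ l $ j)"
  proof (rule rowseries_summable[where c=1])
    fix t l
    show "\<bar>P t $ l $ j\<bar> \<le> 1" using substoch_le1[OF assms, of t l j] substoch_nonneg[OF assms, of t l j]
      by simp
  qed
  then show "summable (\<lambda>m. (A (int m - 1) ** P m) $ i $ j)" by (simp add: mm_nth)
qed

definition "T Z = (\<Sum>m. A (int m + 1) ** mpow Z (m + 2))"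
definition "D Z = (\<Sum>m. A (int m + 2) ** mpow Z (m + 3))"

lemma T_summable: "substoch Z \<Longrightarrow> summable (\<lambda>m. A (int m + 1) ** mpow Z (m + 2))"
proof -
  assume "substoch Z"
  then have "summable (\<lambda>m. A (int m - 1) ** mpow Z m)" by (intro ps_summable substoch_mpow)
  from summable_ignore_initial_segment[OF this, of 2]
  show ?thesis by (simp add: algebra_simps)
qed

lemma D_summable: "substoch Z \<Longrightarrow> summable (\<lambda>m. A (int m + 2) ** mpow Z (m + 3))"
proof -
  assume "substoch Z"
  then have "summable (\<lambda>m. A (int m - 1) ** mpow Z m)" by (intro ps_summable substoch_mpow)
  from summable_ignore_initial_segment[OF this, of 3]
  show ?thesis by (simp add: algebra_simps)
qed

lemma T_split: "substoch Z \<Longrightarrow> T Z = A 1 ** mpow Z 2 + D Z"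
proof -
  assume s: "substoch Z"
  have "(\<Sum>n. A (int (Suc n) + 1) ** mpow Z (Suc n + 2)) = T Z - A (int 0 + 1) ** mpow Z (0 + 2)"
    unfolding T_def by (rule suminf_split_head[OF T_summable[OF s]])
  moreover have "(\<lambda>n. A (int (Suc n) + 1) ** mpow Z (Suc n + 2)) = (\<lambda>n. A (int n + 2) ** mpow Z (n + 3))"
  proof -
    have e: "\<And>n. int (Suc n) + 1 = int n + 2" "\<And>n. Suc n + 2 = n + 3" by simp_all
    show ?thesis by (simp only: e)
  qed
  ultimately show ?thesis by (simp add: D_def mpow_2 algebra_simps)
qed

lemma T_fix: 
  assumes s: "substoch Z"
  shows "(\<Sum>k. A (int k - 1) ** mpow Z k) = A (-1) + A 0 ** Z + T Z"
proof -
  have sm: "summable (\<lambda>k. A (int k - 1) ** mpow Z k)" using s by (intro ps_summable substoch_mpow)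
  have "(\<Sum>k. A (int k - 1) ** mpow Z k) = (\<Sum>n. A (int (n + 2) - 1) ** mpow Z (n + 2)) + (\<Sum>i<2. A (int i - 1) ** mpow Z i)"
    by (rule suminf_split_initial_segment[OF sm])
  also have "(\<lambda>n. A (int (n + 2) - 1) ** mpow Z (n + 2)) = (\<lambda>n. A (int n + 1) ** mpow Z (n + 2))"
    by (simp add: algebra_simps)
  also have "(\<Sum>i<2. A (int i - 1) ** mpow Z i) = A (-1) + A 0 ** Z"
    by (simp add: numeral_2_eq_2)
  finally show ?thesis by (simp add: T_def algebra_simps)
qed

end



locale iter = setting A v for A :: "int \<Rightarrow> real^'n^'n" and v +
  fixes G :: "real^'n^'n" and \<omega> :: "nat \<Rightarrow> real" and X Y :: "nat \<Rightarrow> real^'n^'n"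
  assumes G_nonneg: "0 \<le> G"
    and G_summable: "summable (\<lambda>k. A (int k - 1) ** mpow G k)"
    and G_sol: "G = (\<Sum>k. A (int k - 1) ** mpow G k)"
    and G_min: "\<And>Z. 0 \<le> Z \<Longrightarrow> summable (\<lambda>k. A (int k - 1) ** mpow Z k)
                 \<Longrightarrow> Z = (\<Sum>k. A (int k - 1) ** mpow Z k) \<Longrightarrow> G \<le> Z"
    and X0: "X 0 = 0"
    and Y_def: "\<And>k. (mat 1 - A 0) ** Y k
                 = A (-1) + (\<Sum>m. A (int m + 1) ** mpow (X k) (m + 2))"
    and X_step: "\<And>k. X (Suc k) = Y k + \<omega> (Suc k) *\<^sub>R
                 (matrix_inv (mat 1 - A 0) ** A 1 ** (mpow (Y k) 2 - mpow (X k) 2))"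
    and elig: "eligible A X Y \<omega>"
begin

lemma BY: "B0 ** Y k = A (-1) + T (X k)"
  using Y_def[of k] by (simp add: B0_def T_def)

lemma XS: "X (Suc k) = Y k + \<omega> (Suc k) *\<^sub>R (matrix_inv B0 ** A 1 ** (mpow (Y k) 2 - mpow (X k) 2))"
  using X_step[of k] by (simp add: B0_def)

lemma A1_nn: "0 \<le> A 1" by (rule nonneg) simp

lemma step:
  assumes nnX: "0 \<le> X k" and XY: "X k \<le> Y k" and sX: "substoch (X k)"
  shows "Y k \<le> X (Suc k)" "substoch (Y k)" "substoch (X (Suc k))" "0 \<le> X (Suc k)"
    "X (Suc k) \<le> Y (Suc k)"
proof -
  have om: "0 \<le> \<omega> (Suc k)" using elig unfolding eligible_def by auto
  have sq: "mpow (X k) 2 \<le> mpow (Y k) 2" by (rule mpow_mono[OF nnX XY])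
  have "0 \<le> matrix_inv B0 ** A 1" by (intro mm_nonneg B0_inv_nn A1_nn)
  then have nnE: "0 \<le> matrix_inv B0 ** A 1 ** (mpow (Y k) 2 - mpow (X k) 2)"
    using sq by (rule_tac mm_nonneg) auto
  have "0 \<le> \<omega> (Suc k) *\<^sub>R (matrix_inv B0 ** A 1 ** (mpow (Y k) 2 - mpow (X k) 2))"
    using om nnE by (rule scaleR_nonneg_nonneg)
  then show YX: "Y k \<le> X (Suc k)" unfolding XS by simp
  have nnY: "0 \<le> Y k" using nnX XY by (rule order_trans)
  then show nnX': "0 \<le> X (Suc k)" using YX by (rule order_trans)
  have X'1: "X (Suc k) *v ones \<le> ones" using elig unfolding eligible_def by blast
  then show sX': "substoch (X (Suc k))" using nnX' by (simp add: substoch_def)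
  have "0 \<le> (ones :: real^'n)" by (simp add: vec_le_iff)
  then have "Y k *v ones \<le> X (Suc k) *v ones" using YX by (rule mv_mono_mat)
  then show sY: "substoch (Y k)" using nnY X'1 by (auto simp: substoch_def intro: order_trans)
  define W where "W = \<omega> (Suc k) *\<^sub>R (A 1 ** (mpow (Y k) 2 - mpow (X k) 2))"
  have BX': "B0 ** X (Suc k) = B0 ** Y k + W"
  proof -
    have "B0 ** (matrix_inv B0 ** A 1 ** (mpow (Y k) 2 - mpow (X k) 2)) = A 1 ** (mpow (Y k) 2 - mpow (X k) 2)"
      by (simp add: matrix_mul_assoc B0_inv)
    then show ?thesis unfolding XS W_def by (simp add: mm_add_right mm_scaleR_right)
  qed
  have el: "W \<le> A 1 ** (mpow (X (Suc k)) 2 - mpow (X k) 2)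
              + (\<Sum>m. A (int m + 2) ** (mpow (Y k) (m + 3) - mpow (X k) (m + 3)))"
    using elig unfolding eligible_def W_def by blast
  have DD: "(\<Sum>m. A (int m + 2) ** (mpow (Y k) (m + 3) - mpow (X k) (m + 3))) = D (Y k) - D (X k)"
    unfolding D_def mm_diff_right
    by (rule suminf_diff[OF D_summable[OF sY] D_summable[OF sX], symmetric])
  have DY: "D (Y k) \<le> D (X (Suc k))" unfolding D_def
  proof (rule suminf_mat_le[OF D_summable[OF sY] D_summable[OF sX']])
    fix m
    have "0 \<le> A (int m + 2)" by (rule nonneg) simp
    then show "A (int m + 2) ** mpow (Y k) (m + 3) \<le> A (int m + 2) ** mpow (X (Suc k)) (m + 3)"
      by (intro mm_mono_left mpow_mono nnY YX)
  qed
  have diffeq: "B0 ** (Y (Suc k) - X (Suc k))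
      = (A 1 ** mpow (X (Suc k)) 2 + D (X (Suc k))) - (A 1 ** mpow (X k) 2 + D (X k)) - W"
    unfolding mm_diff_right BX' BY T_split[OF sX'] T_split[OF sX] by simp
  have "0 \<le> B0 ** (Y (Suc k) - X (Suc k))"
    unfolding diffeq
    using el[unfolded DD] DY unfolding mm_diff_right mat_le_iff
    by (auto simp: algebra_simps) (smt (verit))
  then have "0 \<le> Y (Suc k) - X (Suc k)" by (rule B0_pos_mat)
  then show "X (Suc k) \<le> Y (Suc k)" by simp
qed

lemma invariant: "0 \<le> X k \<and> X k \<le> Y k \<and> substoch (X k)"
proof (induction k)
  case 0
  have s0: "substoch (0 :: real^'n^'n)" by (simp add: substoch_def vec_le_iff)
  have "T 0 = 0" unfolding T_def by (simp add: mpow_zero)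
  then have "B0 ** Y 0 = A (-1)" using BY[of 0] X0 by simp
  moreover have "0 \<le> A (-1)" by (rule nonneg) simp
  ultimately have "0 \<le> Y 0" using B0_pos_mat by metis
  then show ?case using X0 s0 by simp
next
  case (Suc k)
  then show ?case using step[of k] by blast
qed

lemma X_mono: "X k \<le> X (Suc k)"
  using invariant[of k] step[of k] by (blast intro: order_trans)

end



context iter
begin

lemma X_e: "0 \<le> X k $ i $ j \<and> X k $ i $ j \<le> 1"
  using invariant[of k] substoch_le1 substoch_nonneg by blast

lemma X_incseq_e: "incseq (\<lambda>k. X k $ i $ j)"
  by (rule incseq_SucI) (use X_mono in \<open>simp add: mat_le_iff\<close>)

definition "L = (\<chi> i j. SUP k. X k $ i $ j)"

lemma X_lim: "X \<longlonglongrightarrow> L"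
proof (intro vec_tendstoI)
  fix i j
  have "bdd_above (range (\<lambda>k. X k $ i $ j))" by (rule bdd_aboveI[where M=1]) (use X_e in auto)
  then show "(\<lambda>k. X k $ i $ j) \<longlonglongrightarrow> L $ i $ j"
    unfolding L_def using X_incseq_e by (simp add: LIMSEQ_incseq_SUP)
qed

lemma X_le_L: "X k \<le> L"
  unfolding mat_le_iff
  by (intro allI incseq_le[OF X_incseq_e] tendsto_vec_nth X_lim)

lemma Y_lim: "Y \<longlonglongrightarrow> L"
proof (intro vec_tendstoI)
  fix i j
  have "X k \<le> Y k" "Y k \<le> X (Suc k)" for k using invariant[of k] step[of k] by auto
  then have b: "X k $ i $ j \<le> Y k $ i $ j" "Y k $ i $ j \<le> X (Suc k) $ i $ j" for k
    by (auto simp: mat_le_iff)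
  have l1: "(\<lambda>k. X k $ i $ j) \<longlonglongrightarrow> L $ i $ j" by (intro tendsto_vec_nth X_lim)
  then have l2: "(\<lambda>k. X (Suc k) $ i $ j) \<longlonglongrightarrow> L $ i $ j" by (rule LIMSEQ_Suc)
  show "(\<lambda>k. Y k $ i $ j) \<longlonglongrightarrow> L $ i $ j"
    by (rule tendsto_sandwich[OF _ _ l1 l2]) (use b in auto)
qed

lemma L_substoch: "substoch L"
proof -
  have "0 \<le> L" using X_le_L[of 0] X0 by simp
  moreover have "(L *v ones) $ i \<le> 1" for i
  proof -
    have "(\<lambda>k. (X k *v ones) $ i) \<longlonglongrightarrow> (L *v ones) $ i"
      unfolding mv_nth by (intro tendsto_intros X_lim)
    moreover have "(X k *v ones) $ i \<le> 1" for k
      using invariant[of k] by (auto simp: substoch_def vec_le_iff)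
    ultimately show ?thesis by (intro LIMSEQ_le_const2) auto
  qed
  ultimately show ?thesis by (simp add: substoch_def vec_le_iff)
qed

lemma T_lim: "(\<lambda>k. T (X k)) \<longlonglongrightarrow> T L"
proof (intro vec_tendstoI)
  fix i j
  have sX: "substoch (X k)" for k using invariant by blast
  let ?a = "\<lambda>m k. (A (int m + 1) ** mpow (X k) (m + 2)) $ i $ j"
  let ?b = "\<lambda>m. (A (int m + 1) ** mpow L (m + 2)) $ i $ j"
  let ?M = "\<lambda>m. \<Sum>l\<in>UNIV. A (int m + 1) $ i $ l"
  have lim: "(\<lambda>k. ?a m k) \<longlonglongrightarrow> ?b m" for m
    by (intro tendsto_vec_nth tendsto_mm tendsto_const tendsto_mpow X_lim)
  have bnd: "norm (?a m k) \<le> ?M m" for m k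
  proof -
    have "0 \<le> A (int m + 1)" by (rule nonneg) simp
    from mm_entry_bound[OF this substoch_mpow[OF sX], of k "m + 2" i j] show ?thesis
      by (simp only: real_norm_def) linarith
  qed
  have sM: "summable ?M"
  proof -
    have "summable (\<lambda>t. \<Sum>l\<in>UNIV. A (int t - 1) $ i $ l)" by (rule rowsum_summable)
    from summable_ignore_initial_segment[OF this, of 2] show ?thesis by (simp add: algebra_simps)
  qed
  have "(\<lambda>k. \<Sum>m. ?a m k) \<longlonglongrightarrow> (\<Sum>m. ?b m)"
    using tannerys_theorem[where a="?a" and b="?b" and M="?M" and F=sequentially] lim bnd sM
    by (simp add: always_eventually)
  moreover have "T (X k) $ i $ j = (\<Sum>m. ?a m k)" for k
    unfolding T_def by (rule suminf_mat_nth[OF T_summable[OF sX]])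
  moreover have "T L $ i $ j = (\<Sum>m. ?b m)"
    unfolding T_def by (rule suminf_mat_nth[OF T_summable[OF L_substoch]])
  ultimately show "(\<lambda>k. T (X k) $ i $ j) \<longlonglongrightarrow> T L $ i $ j" by simp
qed

lemma L_eq: "B0 ** L = A (-1) + T L"
proof -
  have "(\<lambda>k. B0 ** Y k) \<longlonglongrightarrow> B0 ** L" by (intro tendsto_mm tendsto_const Y_lim)
  moreover have "(\<lambda>k. B0 ** Y k) \<longlonglongrightarrow> A (-1) + T L"
    unfolding BY by (intro tendsto_add tendsto_const T_lim)
  ultimately show ?thesis by (rule LIMSEQ_unique)
qed

lemma L_sol: "L = (\<Sum>k. A (int k - 1) ** mpow L k)"
  using L_eq T_fix[OF L_substoch] by (simp add: B0_def mm_diff_left algebra_simps)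

lemma L_summable: "summable (\<lambda>k. A (int k - 1) ** mpow L k)"
  using L_substoch by (intro ps_summable substoch_mpow)

lemma L_is_G: "L = G"
proof -
  have GL: "G \<le> L" using L_substoch L_summable L_sol by (intro G_min) (auto simp: substoch_def)
  have L1: "L *v ones = ones" by (rule solution_stochastic[OF L_substoch L_summable L_sol])
  have "0 \<le> (ones :: real^'n)" by (simp add: vec_le_iff)
  then have "G *v ones \<le> L *v ones" using GL by (rule mv_mono_mat)
  then have sG: "substoch G" using G_nonneg L1 by (simp add: substoch_def)
  have G1: "G *v ones = ones" by (rule solution_stochastic[OF sG G_summable G_sol])
  have "L $ i $ j = G $ i $ j" for i j
  proof -
    have "(\<Sum>l\<in>UNIV. L $ i $ l - G $ i $ l) = 0"
      using arg_cong[where f="\<lambda>x. x $ i", OF L1] arg_cong[where f="\<lambda>x. x $ i", OF G1]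
      by (simp add: mv_nth sum_subtractf)
    then have "L $ i $ j - G $ i $ j = 0"
      using GL by (subst (asm) sum_nonneg_eq_0_iff) (auto simp: mat_le_iff)
    then show ?thesis by simp
  qed
  then show ?thesis by (simp add: vec_eq_iff)
qed

lemma result: "(\<forall>k. X k \<le> X (Suc k)) \<and> X \<longlonglongrightarrow> G"
  using X_mono X_lim L_is_G by auto

end


theorem proposition3:
  fixes A :: "int \<Rightarrow> real^'n^'n"
    and v :: "real^'n"
    and G :: "real^'n^'n"
    and \<omega> :: "nat \<Rightarrow> real"
    and X Y :: "nat \<Rightarrow> real^'n^'n"
  assumes nonneg: "\<And>i. i \<ge> -1 \<Longrightarrow> 0 \<le> A i"
    and summable_A: "summable (\<lambda>k. A (int k - 1))"
    and irred: "irreducible_mat (\<Sum>k. A (int k - 1))"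
    and stoch: "row_stochastic (\<Sum>k. A (int k - 1))"
    and summable_iA: "summable (\<lambda>k. of_int (int k - 1) *\<^sub>R A (int k - 1))"
    and v_pos: "\<And>i. v $ i > 0"
    and v_stat: "v v* (\<Sum>k. A (int k - 1)) = v"
    and v_norm: "v \<bullet> ones = 1"
    and eta_neg: "v \<bullet> ((\<Sum>k. of_int (int k - 1) *\<^sub>R A (int k - 1)) *v ones) < 0"
    and G_nonneg: "0 \<le> G"
    and G_summable: "summable (\<lambda>k. A (int k - 1) ** mpow G k)"
    and G_sol: "G = (\<Sum>k. A (int k - 1) ** mpow G k)"
    and G_min: "\<And>Z. 0 \<le> Z \<Longrightarrow> summable (\<lambda>k. A (int k - 1) ** mpow Z k)
                 \<Longrightarrow> Z = (\<Sum>k. A (int k - 1) ** mpow Z k) \<Longrightarrow> G \<le> Z"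
    and X0: "X 0 = 0"
    and Y_def: "\<And>k. (mat 1 - A 0) ** Y k
                 = A (-1) + (\<Sum>m. A (int m + 1) ** mpow (X k) (m + 2))"
    and X_step: "\<And>k. X (Suc k) = Y k + \<omega> (Suc k) *\<^sub>R
                 (matrix_inv (mat 1 - A 0) ** A 1 ** (mpow (Y k) 2 - mpow (X k) 2))"
    and elig: "eligible A X Y \<omega>"
  shows "(\<forall>k. X k \<le> X (Suc k)) \<and> X \<longlonglongrightarrow> G"
proof -
  interpret iter A v G \<omega> X Y
    by (unfold_locales; (fact assms)?)
  show ?thesis by (rule result)
qed

end
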